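(* Let $m,n$ be positive integers with $n\ge 2$, let $\Pi$ be a regular $(nm+2)$-gon, and let $\Gamma^m_{A_{n-1}}$ and $\tau_m$ be the quiver of $m$-diagonals of $\Pi$ and the rotation map described in the context. Then $(\Gamma^m_{A_{n-1}},\tau_m)$ is a connected stable translation quiver, i.e. it is not a disjoint union of two non-empty stable translation subquivers.
   Context: The vertices of $\Pi$ are labelled $1,\dots,nm+2$ clockwise, and vertex labels are taken modulo $nm+2$. A diagonal with endpoints $i,j$ is written $(i,j)=(j,i)$. An $m$-diagonal is a diagonal of $\Pi$ that divides $\Pi$ into an $(mj+2)$-gon and an $(m(n-j)+2)$-gon for some integer $1\le j\le n-1$. The quiver $\Gamma^m_{A_{n-1}}$ has as vertices the $m$-diagonals of $\Pi$. There is an arrow $D\to D'$ (and at most one) exactly when $D$ and $D'$ share an endpoint $i$, with other endpoints $j$ and $j'$ respectively, such that $D$, $D'$ and the boundary arc from $j$ to $j'$ not containing $i$ bound an $(m+2)$-gon, and $D$ is rotated onto the line through $D'$ by a clockwise rotation about $i$. Equivalently, $D=(i,j)$ and $D'=(i,j+m)$ are both $m$-diagonals. The map $\tau_m$ sends an $m$-diagonal to its image under the anticlockwise rotation of $\Pi$ about its centre through $2m\pi/(nm+2)$, that is $(i,j)\mapsto(i-m,j-m)$. A translation quiver is a pair $(\Gamma,\tau)$ with the following properties: $\Gamma$ is a locally finite quiver with vertex set $\Gamma_0$; $\tau:\Gamma_0'\to\Gamma_0$ is an injective map defined on a subset $\Gamma_0'\subseteq\Gamma_0$; and for all $X\in\Gamma_0$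 and $Y\in\Gamma_0'$ the number of arrows $X\to Y$ equals the number of arrows $\tau(Y)\to X$. The translation quiver is stable if $\Gamma_0'=\Gamma_0$ and $\tau$ is bijective. *)

theory Defs
  imports Main
begin

text \<open>A quiver with at most one arrow between any two vertices is given by its
vertex set V and its arrow relation A (A x y means there is an arrow x \<rightarrow> y).
The number of arrows X \<rightarrow> Y is then 1 if A X Y and 0 otherwise.\<close>

definition quiver :: "'a set \<Rightarrow> ('a \<Rightarrow> 'a \<Rightarrow> bool) \<Rightarrow> bool" where
  "quiver V A \<longleftrightarrow> (\<forall>x y. A x y \<longrightarrow> x \<in> V \<and> y \<in> V)"

definition locally_finite :: "'a set \<Rightarrow> ('a \<Rightarrow> 'a \<Rightarrow> bool) \<Rightarrow> bool" where
  "locally_finite V A \<longleftrightarrow> (\<forall>x\<in>V. finite {y. A x y} \<and> finite {y. A y x})"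

definition translation_quiver ::
  "'a set \<Rightarrow> ('a \<Rightarrow> 'a \<Rightarrow> bool) \<Rightarrow> 'a set \<Rightarrow> ('a \<Rightarrow> 'a) \<Rightarrow> bool" where
  "translation_quiver V A V' \<tau> \<longleftrightarrow>
     quiver V A \<and> locally_finite V A \<and> V' \<subseteq> V \<and> \<tau> ` V' \<subseteq> V \<and> inj_on \<tau> V' \<and>
     (\<forall>X\<in>V. \<forall>Y\<in>V'. A X Y \<longleftrightarrow> A (\<tau> Y) X)"

definition stable_translation_quiver ::
  "'a set \<Rightarrow> ('a \<Rightarrow> 'a \<Rightarrow> bool) \<Rightarrow> ('a \<Rightarrow> 'a) \<Rightarrow> bool" where
  "stable_translation_quiver V A \<tau> \<longleftrightarrow>
     translation_quiver V A V \<tau> \<and> bij_betw \<tau> V V"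

definition restr_arrows :: "('a \<Rightarrow> 'a \<Rightarrow> bool) \<Rightarrow> 'a set \<Rightarrow> 'a \<Rightarrow> 'a \<Rightarrow> bool" where
  "restr_arrows A W = (\<lambda>x y. A x y \<and> x \<in> W \<and> y \<in> W)"

definition connected_stable_translation_quiver ::
  "'a set \<Rightarrow> ('a \<Rightarrow> 'a \<Rightarrow> bool) \<Rightarrow> ('a \<Rightarrow> 'a) \<Rightarrow> bool" where
  "connected_stable_translation_quiver V A \<tau> \<longleftrightarrow>
     stable_translation_quiver V A \<tau> \<and>
     \<not> (\<exists>V1 V2. V1 \<noteq> {} \<and> V2 \<noteq> {} \<and> V1 \<inter> V2 = {} \<and> V1 \<union> V2 = V \<and>
           (\<forall>x y. A x y \<longrightarrow> (x \<in> V1 \<and> y \<in> V1) \<or> (x \<in> V2 \<and> y \<in> V2)) \<and>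
           stable_translation_quiver V1 (restr_arrows A V1) \<tau> \<and>
           stable_translation_quiver V2 (restr_arrows A V2) \<tau>)"

text \<open>Vertices of \<Pi> are labelled 1..N with N = nm+2; labels are taken modulo N,
lab k being the representative of k in {1..N}.\<close>
definition lab :: "int \<Rightarrow> int \<Rightarrow> int" where
  "lab N k = (k - 1) mod N + 1"

text \<open>The polygon cut off on the
clockwise side from i to j has ((j - i) mod N) + 1 vertices; it is an (mk+2)-gon
(and the other part an (m(n-k)+2)-gon) iff (j - i) mod N = mk+1.\<close>
definition m_diagonal :: "nat \<Rightarrow> nat \<Rightarrow> int set \<Rightarrow> bool" where
  "m_diagonal m n D \<longleftrightarrow>
     (let N = int (n*m+2) in
      \<exists>i j. i \<in> {1..N} \<and> j \<in> {1..N} \<and> i \<noteq> j \<and> D = {i, j} \<and>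
        (\<exists>k::nat. 1 \<le> k \<and> k \<le> n - 1 \<and>
           (j - i) mod N = int (m*k + 1) \<and> (i - j) mod N = int (m*(n-k) + 1)))"

definition m_diagonals :: "nat \<Rightarrow> nat \<Rightarrow> int set set" where
  "m_diagonals m n = {D. m_diagonal m n D}"

definition Gamma_arrow :: "nat \<Rightarrow> nat \<Rightarrow> int set \<Rightarrow> int set \<Rightarrow> bool" where
  "Gamma_arrow m n D D' \<longleftrightarrow>
     (let N = int (n*m+2) in
      m_diagonal m n D \<and> m_diagonal m n D' \<and>
      (\<exists>i j. i \<in> {1..N} \<and> j \<in> {1..N} \<and> D = {i, j} \<and> D' = {i, lab N (j + int m)}))"

definition tau_m :: "nat \<Rightarrow> nat \<Rightarrow> int set \<Rightarrow> int set" where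
  "tau_m m n D = (\<lambda>v. lab (int (n*m+2)) (v - int m)) ` D"

end

theory Submission imports Defs begin
lemma lab_range: "(N::int) > 0 \<Longrightarrow> lab N k \<in> {1..N}"
proof -
  assume N: "N > 0"
  have "0 \<le> (k-1) mod N" "(k-1) mod N < N" using N by simp_all
  then show ?thesis unfolding lab_def atLeastAtMost_iff by (intro conjI; linarith)
qed
lemma lab_id: "(x::int) \<in> {1..N} \<Longrightarrow> lab N x = x"
  by (simp add: lab_def)
lemma lab_lab: "lab N (lab N a + c) = lab N (a + c)"
proof -
  have "((a - 1) mod N + 1 + c - 1) mod N = ((a - 1) mod N + c) mod N" by (simp add: algebra_simps)
  also have "\<dots> = (a - 1 + c) mod N" by (rule mod_add_left_eq)
  also have "a - 1 + c = a + c - 1" by simp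
  finally show ?thesis unfolding lab_def by simp
qed
lemma lab_lab0: "lab N (lab N a) = lab N a"
  using lab_lab[of N a 0] by simp
lemma lab_eq_iff: "lab N x = lab N y \<longleftrightarrow> x mod N = y mod N"
proof -
  have "lab N x = lab N y \<longleftrightarrow> (x - 1) mod N = (y - 1) mod N" by (simp add: lab_def)
  also have "\<dots> \<longleftrightarrow> x mod N = y mod N"
    by (metis mod_diff_cong diff_add_cancel mod_add_cong)
  finally show ?thesis .
qed
lemma lab_diff_mod: "(lab N a - lab N b) mod N = (a - b) mod N"
proof -
  have "(lab N a - lab N b) mod N = ((a - 1) mod N - (b - 1) mod N) mod N"
    unfolding lab_def by simp
  also have "\<dots> = ((a - 1) - (b - 1)) mod N" by (rule mod_diff_eq)
  finally show ?thesis by simp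
qed
lemma lab_periodic: "lab N (a + N) = lab N a"
proof -
  have e: "a + N - 1 = (a - 1) + N" by simp
  have "(a + N - 1) mod N = (a - 1) mod N" unfolding e by (rule mod_add_self2)
  then show ?thesis unfolding lab_def by simp
qed

abbreviation NN :: "nat \<Rightarrow> nat \<Rightarrow> int" where "NN m n \<equiv> int (n*m+2)"

lemma d_bounds:
  assumes "m \<ge> 1" "1 \<le> k" "k \<le> n - 1" "n \<ge> 2"
  shows "0 < int (m*k+1)" "int (m*k+1) < NN m n" "NN m n - int (m*k+1) = int (m*(n-k)+1)"
proof -
  show "0 < int (m*k+1)" by (rule of_nat_0_less_iff[THEN iffD2]) simp
  have "m*k \<le> m*(n-1)" using assms by simp
  also have "m*(n-1) = n*m - m" by (simp add: algebra_simps diff_mult_distrib2)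
  finally have "m*k \<le> n*m - m" .
  then show "int (m*k+1) < NN m n" using assms by linarith
  have "m*(n-k) = n*m - m*k" by (simp add: algebra_simps diff_mult_distrib2)
  moreover have "m*k \<le> n*m" using assms by simp
  ultimately show "NN m n - int (m*k+1) = int (m*(n-k)+1)" by simp
qed

lemma mdiag_iff:
  assumes "m \<ge> 1" "n \<ge> 2"
  shows "m_diagonal m n D \<longleftrightarrow>
    (\<exists>i k. 1 \<le> k \<and> k \<le> n-1 \<and> D = {lab (NN m n) i, lab (NN m n) (i + int (m*k+1))})"
proof
  let ?N = "NN m n"
  have Npos: "?N > 0" by (rule of_nat_0_less_iff[THEN iffD2]) simp
  assume "m_diagonal m n D"
  then obtain i j k where ij: "i \<in> {1..?N}" "j \<in> {1..?N}" "D = {i,j}" and k: "1 \<le> k" "k \<le> n - 1"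
    "(j - i) mod ?N = int (m*k+1)"
    unfolding m_diagonal_def Let_def by blast
  have "lab ?N i = i" using ij lab_id by blast
  moreover have "lab ?N (i + int (m*k+1)) = j"
  proof -
    have "(i + (j - i) mod ?N) mod ?N = (i + (j - i)) mod ?N" by (rule mod_add_right_eq)
    then have "lab ?N (i + int (m*k+1)) = lab ?N j" unfolding lab_eq_iff k(3)[symmetric] by simp
    then show ?thesis using lab_id ij by metis
  qed
  ultimately show "\<exists>i k. 1 \<le> k \<and> k \<le> n-1 \<and> D = {lab ?N i, lab ?N (i + int (m*k+1))}"
    using ij k by metis
next
  let ?N = "NN m n"
  have Npos: "?N > 0" by (rule of_nat_0_less_iff[THEN iffD2]) simp
  assume "\<exists>i k. 1 \<le> k \<and> k \<le> n-1 \<and> D = {lab ?N i, lab ?N (i + int (m*k+1))}"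
  then obtain i k where k: "1 \<le> k" "k \<le> n-1" and D: "D = {lab ?N i, lab ?N (i + int (m*k+1))}"
    by blast
  define d where "d = int (m*k+1)"
  note db = d_bounds[OF assms(1) k assms(2), folded d_def]
  define i' where "i' = lab ?N i"
  define j' where "j' = lab ?N (i + d)"
  have r: "i' \<in> {1..?N}" "j' \<in> {1..?N}" unfolding i'_def j'_def using lab_range Npos by auto
  have e1: "(j' - i') mod ?N = d" unfolding i'_def j'_def lab_diff_mod using db by simp
  have "(i' - j') mod ?N = ?N - d" using zmod_zminus1_eq_if[of "j' - i'" ?N] e1 db by simp
  then have e2: "(i' - j') mod ?N = int (m*(n-k)+1)" using db by simp
  have ne: "i' \<noteq> j'" using e1 db by auto
  show "m_diagonal m n D" unfolding m_diagonal_def Let_def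
    using r ne e1 e2 k D unfolding i'_def j'_def d_def by blast
qed

lemma lab_lab_minus: "lab N (lab N a - c) = lab N (a - c)"
  using lab_lab[of N a "- c"] by simp

definition taup :: "nat \<Rightarrow> nat \<Rightarrow> int set \<Rightarrow> int set" where
  "taup m n D = (\<lambda>v. lab (NN m n) (v + int m)) ` D"

lemma tau_pair: "tau_m m n {lab (NN m n) a, lab (NN m n) b} = {lab (NN m n) (a - int m), lab (NN m n) (b - int m)}"
  unfolding tau_m_def by (simp add: lab_lab_minus)

lemma taup_pair: "taup m n {lab (NN m n) a, lab (NN m n) b} = {lab (NN m n) (a + int m), lab (NN m n) (b + int m)}"
  unfolding taup_def by (simp add: lab_lab)

lemma tau_taup: "D \<subseteq> {1..NN m n} \<Longrightarrow> tau_m m n (taup m n D) = D"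
proof -
  assume D: "D \<subseteq> {1..NN m n}"
  have "\<And>v. v \<in> D \<Longrightarrow> lab (NN m n) (lab (NN m n) (v + int m) - int m) = v"
    using D by (simp add: lab_lab_minus lab_id subset_iff)
  then show ?thesis unfolding tau_m_def taup_def image_image by simp
qed

lemma taup_tau: "D \<subseteq> {1..NN m n} \<Longrightarrow> taup m n (tau_m m n D) = D"
proof -
  assume D: "D \<subseteq> {1..NN m n}"
  have "\<And>v. v \<in> D \<Longrightarrow> lab (NN m n) (lab (NN m n) (v - int m) + int m) = v"
    using D by (simp add: lab_lab lab_id subset_iff)
  then show ?thesis unfolding tau_m_def taup_def image_image by simp
qed

lemma mdiag_sub: "m_diagonal m n D \<Longrightarrow> D \<subseteq> {1..NN m n}"
  unfolding m_diagonal_def Let_def by auto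

lemma mdiag_tau:
  assumes "m \<ge> 1" "n \<ge> 2" "m_diagonal m n D"
  shows "m_diagonal m n (tau_m m n D)"
proof -
  obtain i k where k: "1 \<le> k" "k \<le> n-1" and D: "D = {lab (NN m n) i, lab (NN m n) (i + int (m*k+1))}"
    using assms mdiag_iff by blast
  have e: "i + int (m*k+1) - int m = (i - int m) + int (m*k+1)" by simp
  show ?thesis unfolding D tau_pair e using mdiag_iff[OF assms(1,2)] k by blast
qed

lemma mdiag_taup:
  assumes "m \<ge> 1" "n \<ge> 2" "m_diagonal m n D"
  shows "m_diagonal m n (taup m n D)"
proof -
  obtain i k where k: "1 \<le> k" "k \<le> n-1" and D: "D = {lab (NN m n) i, lab (NN m n) (i + int (m*k+1))}"
    using assms mdiag_iff by blast
  have e: "i + int (m*k+1) + int m = (i + int m) + int (m*k+1)" by simp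
  show ?thesis unfolding D taup_pair e using mdiag_iff[OF assms(1,2)] k by blast
qed

lemma arrow_iff:
  "Gamma_arrow m n X Y \<longleftrightarrow> m_diagonal m n X \<and> m_diagonal m n Y \<and>
     (\<exists>i j. X = {lab (NN m n) i, lab (NN m n) j} \<and> Y = {lab (NN m n) i, lab (NN m n) (j + int m)})"
proof
  assume "Gamma_arrow m n X Y"
  then obtain i j where "m_diagonal m n X" "m_diagonal m n Y" "i \<in> {1..NN m n}" "j \<in> {1..NN m n}"
    "X = {i, j}" "Y = {i, lab (NN m n) (j + int m)}"
    unfolding Gamma_arrow_def Let_def by blast
  then show "m_diagonal m n X \<and> m_diagonal m n Y \<and>
     (\<exists>i j. X = {lab (NN m n) i, lab (NN m n) j} \<and> Y = {lab (NN m n) i, lab (NN m n) (j + int m)})"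
    using lab_id by metis
next
  have Npos: "NN m n > 0" by (rule of_nat_0_less_iff[THEN iffD2]) simp
  assume "m_diagonal m n X \<and> m_diagonal m n Y \<and>
     (\<exists>i j. X = {lab (NN m n) i, lab (NN m n) j} \<and> Y = {lab (NN m n) i, lab (NN m n) (j + int m)})"
  then obtain i j where h: "m_diagonal m n X" "m_diagonal m n Y"
    "X = {lab (NN m n) i, lab (NN m n) j}" "Y = {lab (NN m n) i, lab (NN m n) (j + int m)}" by blast
  have "Y = {lab (NN m n) i, lab (NN m n) (lab (NN m n) j + int m)}" using h by (simp add: lab_lab)
  then show "Gamma_arrow m n X Y" unfolding Gamma_arrow_def Let_def
    using h lab_range[OF Npos] by blast
qed

definition Qd :: "nat \<Rightarrow> nat \<Rightarrow> int \<Rightarrow> nat \<Rightarrow> int set" where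
  "Qd m n i k = {lab (NN m n) i, lab (NN m n) (i + int (m*k+1))}"

lemma Q_mdiag: "m \<ge> 1 \<Longrightarrow> n \<ge> 2 \<Longrightarrow> 1 \<le> k \<Longrightarrow> k \<le> n-1 \<Longrightarrow> m_diagonal m n (Qd m n i k)"
  unfolding Qd_def using mdiag_iff by blast

lemma Q_arrow:
  assumes "m \<ge> 1" "n \<ge> 2" "1 \<le> k" "k+1 \<le> n-1"
  shows "Gamma_arrow m n (Qd m n i k) (Qd m n i (k+1))"
proof -
  have e: "i + int (m*(k+1)+1) = (i + int (m*k+1)) + int m" by (simp add: algebra_simps)
  have m1: "m_diagonal m n (Qd m n i k)" "m_diagonal m n (Qd m n i (k+1))"
    using Q_mdiag[OF assms(1,2)] assms by auto
  have Y: "Qd m n i (k+1) = {lab (NN m n) i, lab (NN m n) ((i + int (m*k+1)) + int m)}"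
    unfolding Qd_def e ..
  show ?thesis unfolding arrow_iff using m1 Y unfolding Qd_def[of m n i k] by blast
qed

lemma Q_flip:
  assumes "m \<ge> 1" "n \<ge> 2"
  shows "Qd m n i 1 = Qd m n (i + int (m+1)) (n-1)"
proof -
  have "NN m n - int (m*1+1) = int (m*(n-1)+1)"
    using d_bounds(3)[OF assms(1), of 1 n] assms by simp
  then have e: "i + int (m+1) + int (m*(n-1)+1) = i + NN m n" by simp
  show ?thesis unfolding Qd_def e lab_periodic by auto
qed

lemma tau_Q: "tau_m m n (Qd m n i k) = Qd m n (i - int m) k"
proof -
  have e: "i + int (m*k+1) - int m = (i - int m) + int (m*k+1)" by simp
  show ?thesis unfolding Qd_def tau_pair e ..
qed

lemma taup_Q: "taup m n (Qd m n i k) = Qd m n (i + int m) k"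
proof -
  have e: "i + int (m*k+1) + int m = (i + int m) + int (m*k+1)" by simp
  show ?thesis unfolding Qd_def taup_pair e ..
qed

lemma mdiag_Q: "m \<ge> 1 \<Longrightarrow> n \<ge> 2 \<Longrightarrow> m_diagonal m n D \<Longrightarrow> \<exists>i k. 1 \<le> k \<and> k \<le> n-1 \<and> D = Qd m n i k"
  unfolding Qd_def using mdiag_iff by blast

theorem proposition2p3:
  fixes m n :: nat
  assumes "m \<ge> 1" and "n \<ge> 2"
  shows "connected_stable_translation_quiver (m_diagonals m n) (Gamma_arrow m n) (tau_m m n)"
proof -
  let ?V = "m_diagonals m n"
  let ?A = "Gamma_arrow m n"
  let ?t = "tau_m m n"
  have Vsub: "?V \<subseteq> Pow {1..NN m n}" unfolding m_diagonals_def using mdiag_sub by blast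
  have finV: "finite ?V" by (rule finite_subset[OF Vsub]) simp
  have Aq: "\<And>x y. ?A x y \<Longrightarrow> x \<in> ?V \<and> y \<in> ?V" unfolding arrow_iff m_diagonals_def by blast
  have tV: "?t ` ?V \<subseteq> ?V" unfolding m_diagonals_def using mdiag_tau[OF assms] by blast
  have tpV: "taup m n ` ?V \<subseteq> ?V" unfolding m_diagonals_def using mdiag_taup[OF assms] by blast
  have tpt: "\<And>D. D \<in> ?V \<Longrightarrow> taup m n (?t D) = D" using Vsub taup_tau by blast
  have ttp: "\<And>D. D \<in> ?V \<Longrightarrow> ?t (taup m n D) = D" using Vsub tau_taup by blast
  have bij: "bij_betw ?t ?V ?V"
    by (rule bij_betw_byWitness[where f'="taup m n"]) (use tpt ttp tV tpV in auto)
  have trans: "?A X Y \<longleftrightarrow> ?A (?t Y) X" if X: "X \<in> ?V" and Y: "Y \<in> ?V" for X Y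
  proof
    assume "?A X Y"
    then obtain i j where h: "X = {lab (NN m n) i, lab (NN m n) j}" "Y = {lab (NN m n) i, lab (NN m n) (j + int m)}"
      unfolding arrow_iff by blast
    have "?t Y = {lab (NN m n) j, lab (NN m n) (i - int m)}" unfolding h tau_pair by auto
    moreover have "X = {lab (NN m n) j, lab (NN m n) (i - int m + int m)}" using h by auto
    moreover have "m_diagonal m n (?t Y)" "m_diagonal m n X" using X Y tV unfolding m_diagonals_def by auto
    ultimately show "?A (?t Y) X" unfolding arrow_iff by blast
  next
    assume "?A (?t Y) X"
    then obtain a b where h: "?t Y = {lab (NN m n) a, lab (NN m n) b}" "X = {lab (NN m n) a, lab (NN m n) (b + int m)}"
      unfolding arrow_iff by blast
    have "Y = taup m n (?t Y)" using tpt Y by simp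
    also have "\<dots> = {lab (NN m n) (b + int m), lab (NN m n) (a + int m)}" unfolding h taup_pair by auto
    finally have "Y = {lab (NN m n) (b + int m), lab (NN m n) (a + int m)}" .
    moreover have "X = {lab (NN m n) (b + int m), lab (NN m n) a}" using h by auto
    moreover have "m_diagonal m n Y" "m_diagonal m n X" using X Y unfolding m_diagonals_def by auto
    ultimately show "?A X Y" unfolding arrow_iff by blast
  qed
  have stable: "stable_translation_quiver ?V ?A ?t"
    unfolding stable_translation_quiver_def translation_quiver_def quiver_def locally_finite_def
  proof (intro conjI allI impI ballI)
    show "bij_betw ?t ?V ?V" by (rule bij)
    show "inj_on ?t ?V" using bij bij_betw_def by blast
    show "?t ` ?V \<subseteq> ?V" by (rule tV)
    show "?V \<subseteq> ?V" by simp
    fix x assume "x \<in> ?V"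
    show "finite {y. ?A x y}" by (rule finite_subset[OF _ finV]) (use Aq in blast)
    show "finite {y. ?A y x}" by (rule finite_subset[OF _ finV]) (use Aq in blast)
  next
    fix x y assume "?A x y" then show "x \<in> ?V" "y \<in> ?V" using Aq by auto
  next
    fix X Y assume "X \<in> ?V" "Y \<in> ?V" then show "?A X Y = ?A (?t Y) X" by (rule trans)
  qed
  have conn: False if
    ne1: "V1 \<noteq> {}" and ne2: "V2 \<noteq> {}" and disj: "V1 \<inter> V2 = {}" and un: "V1 \<union> V2 = ?V" and
    sep: "\<forall>x y. ?A x y \<longrightarrow> (x \<in> V1 \<and> y \<in> V1) \<or> (x \<in> V2 \<and> y \<in> V2)" and
    st1: "stable_translation_quiver V1 (restr_arrows ?A V1) ?t" for V1 V2
  proof -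
    have dj: "z \<notin> V2" if "z \<in> V1" for z using disj that by blast
    have c1: "y \<in> V1 \<longleftrightarrow> x \<in> V1" if "?A x y" for x y
    proof -
      have "(x \<in> V1 \<and> y \<in> V1) \<or> (x \<in> V2 \<and> y \<in> V2)" using sep that by blast
      then show ?thesis using dj by blast
    qed
    have b1: "?t ` V1 = V1" using st1 unfolding stable_translation_quiver_def by (simp add: bij_betw_def)
    have c3: "?t D \<in> V1" if "D \<in> V1" for D
    proof -
      have "?t D \<in> ?t ` V1" using that by (rule imageI)
      then show ?thesis unfolding b1 .
    qed
    have c4: "taup m n D \<in> V1" if "D \<in> V1" for D
    proof -
      have "D \<in> ?t ` V1" unfolding b1 by (rule that)
      then obtain E where E: "E \<in> V1" "D = ?t E" by (rule imageE)
      then have "E \<in> ?V" using un by blast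
      then have "taup m n D = E" using tpt E(2) by simp
      then show ?thesis using E(1) by simp
    qed
    define P where "P i \<longleftrightarrow> Qd m n i 1 \<in> V1" for i
    have chain: "Qd m n i k \<in> V1 \<longleftrightarrow> P i" if "1 \<le> k" "k \<le> n-1" for i k
      using that
    proof (induction k)
      case 0 then show ?case by simp
    next
      case (Suc k)
      show ?case
      proof (cases "k = 0")
        case True then show ?thesis unfolding P_def by simp
      next
        case False
        then have "Qd m n i k \<in> V1 \<longleftrightarrow> P i" using Suc by simp
        moreover have "?A (Qd m n i k) (Qd m n i (k+1))" using Q_arrow[OF assms] False Suc by simp
        ultimately show ?thesis using c1 by simp
      qed
    qed
    have s1: "P i \<longleftrightarrow> P (i + int m)" for i
      unfolding P_def using c4[of "Qd m n i 1"] c3[of "Qd m n (i + int m) 1"] by (auto simp: taup_Q tau_Q)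
    have s2: "P i \<longleftrightarrow> P (i + int (m+1))" for i
      using chain[of "n-1" "i + int (m+1)"] assms unfolding P_def Q_flip[OF assms, of i] by simp
    have step: "P j \<longleftrightarrow> P (j + 1)" for j
      using s1[of "j - int m"] s2[of "j - int m"] by (simp add: algebra_simps)
    obtain D0 where D0: "D0 \<in> V1" using ne1 by blast
    then have "D0 \<in> ?V" using un by blast
    then have "m_diagonal m n D0" unfolding m_diagonals_def by simp
    then obtain i0 k0 where ik: "1 \<le> k0" "k0 \<le> n-1" "D0 = Qd m n i0 k0"
      using mdiag_Q[OF assms] by blast
    have "P i0" using chain[OF ik(1,2), of i0] D0 ik(3) by simp
    have allP: "P j" for j
    proof (induction j rule: int_induct[where k=i0])
      case base then show ?case by fact
    next
      case (step1 i) then show ?case using step by blast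
    next
      case (step2 i) then show ?case using step[of "i - 1"] by simp
    qed
    have "?V \<subseteq> V1"
    proof
      fix D assume "D \<in> ?V"
      then have "m_diagonal m n D" unfolding m_diagonals_def by simp
      then obtain i k where ik: "1 \<le> k" "k \<le> n-1" "D = Qd m n i k"
        using mdiag_Q[OF assms] by blast
      show "D \<in> V1" using chain[OF ik(1,2), of i] allP[of i] ik(3) by simp
    qed
    then show False using ne2 disj un by blast
  qed
  show ?thesis unfolding connected_stable_translation_quiver_def using stable conn by blast
qed

end
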